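(* Let $k>0$. For $N\in\mathbb{N}^+$ and $h=\frac1{N+1}$, let $\mathcal{A}_h$ be the matrix defined below and $T_h(t)=e^{\mathcal{A}_ht}$ the semigroup it generates on $\mathbb{Y}_h=(\mathbb{C}^{N+1},\langle\cdot,\cdot\rangle_{\mathbb{Y}_h})$. Then the family $\{T_h(t)\}$ is uniformly exponentially stable: there exist constants $M>0$ and $\omega>0$ independent of $h$ such that $$\|T_h(t)\|\le Me^{-\omega t}\quad\text{for all }t\ge0\text{ and all such }h\in(0,1),$$ where $\|\cdot\|$ is the operator norm induced by $\langle\cdot,\cdot\rangle_{\mathbb{Y}_h}$.
   Context: Let $D_h$ be the $(N+1)\times(N+1)$ lower bidiagonal matrix with $\frac12$ on the diagonal and first subdiagonal, and $M_h$ the $(N+1)\times(N+1)$ upper bidiagonal matrix with $-\frac1h$ on the diagonal and $\frac1h$ on the first superdiagonal; $e_{N+1}=(0,\dots,0,1)^\top$. For $Y_h=(y_1,\dots,y_{N+1})^\top\in\mathbb{C}^{N+1}$ let $Z_h$ solve $D_h^\top Z_h=-M_h^\top Y_h+\tfrac{ik}2y_{N+1}e_{N+1}$ and set $\mathcal{A}_hY_h=D_h^{-1}[-iM_hZ_h-\tfrac kh y_{N+1}e_{N+1}]$. This is the order-reduction semi-discretization of the Schrödinger system $w_t=-iw_{xx}$, $w(0,t)=0$, $w_x(1,t)=-ikw(1,t)$ on $[0,1]$ with mesh size $h$. The inner product on $\mathbb{Y}_h=\mathbb{C}^{N+1}$ is $\langle Y_h,\widetilde Y_h\rangle_{\mathbb{Y}_h}=h\langle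 D_hY_h,D_h\widetilde Y_h\rangle$, with $\langle\cdot,\cdot\rangle$ the standard inner product of $\mathbb{C}^{N+1}$. *)

theory Defs
  imports "HOL-Analysis.Analysis"
begin

text \<open>Vectors of \<open>\<complex>\<^sup>N\<^sup>+\<^sup>1\<close> are functions \<open>nat \<Rightarrow> complex\<close> supported on \<open>{0..N}\<close>;
  index \<open>i\<close> corresponds to the paper's component \<open>i+1\<close>.\<close>

definition isvec :: "nat \<Rightarrow> (nat \<Rightarrow> complex) \<Rightarrow> bool" where
  "isvec N Y \<longleftrightarrow> (\<forall>i>N. Y i = 0)"

definition mesh :: "nat \<Rightarrow> real" where
  "mesh N = 1 / (real N + 1)"

definition Dmul :: "nat \<Rightarrow> (nat \<Rightarrow> complex) \<Rightarrow> (nat \<Rightarrow> complex)" where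
  "Dmul N Y i = (if i \<le> N then (Y i + (if 0 < i then Y (i - 1) else 0)) / 2 else 0)"

definition DTmul :: "nat \<Rightarrow> (nat \<Rightarrow> complex) \<Rightarrow> (nat \<Rightarrow> complex)" where
  "DTmul N Z i = (if i \<le> N then (Z i + (if i < N then Z (i + 1) else 0)) / 2 else 0)"

definition Mmul :: "nat \<Rightarrow> (nat \<Rightarrow> complex) \<Rightarrow> (nat \<Rightarrow> complex)" where
  "Mmul N Y i = (if i \<le> N then (- Y i + (if i < N then Y (i + 1) else 0)) / complex_of_real (mesh N) else 0)"

definition MTmul :: "nat \<Rightarrow> (nat \<Rightarrow> complex) \<Rightarrow> (nat \<Rightarrow> complex)" where
  "MTmul N Y i = (if i \<le> N then (- Y i + (if 0 < i then Y (i - 1) else 0)) / complex_of_real (mesh N) else 0)"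

definition Zsol :: "real \<Rightarrow> nat \<Rightarrow> (nat \<Rightarrow> complex) \<Rightarrow> (nat \<Rightarrow> complex)" where
  "Zsol k N Y = (THE Z. isvec N Z \<and>
     DTmul N Z = (\<lambda>i. - MTmul N Y i + (if i = N then \<i> * complex_of_real k / 2 * Y N else 0)))"

definition Aop :: "real \<Rightarrow> nat \<Rightarrow> (nat \<Rightarrow> complex) \<Rightarrow> (nat \<Rightarrow> complex)" where
  "Aop k N Y = (THE W. isvec N W \<and>
     Dmul N W = (\<lambda>i. - \<i> * Mmul N (Zsol k N Y) i
        - (if i = N then complex_of_real (k / mesh N) * Y N else 0)))"

definition Tsg :: "real \<Rightarrow> nat \<Rightarrow> real \<Rightarrow> (nat \<Rightarrow> complex) \<Rightarrow> (nat \<Rightarrow> complex)" where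
  "Tsg k N t Y = (\<lambda>i. \<Sum>n. complex_of_real (t ^ n / fact n) * ((Aop k N ^^ n) Y) i)"

definition normY :: "nat \<Rightarrow> (nat \<Rightarrow> complex) \<Rightarrow> real" where
  "normY N Y = sqrt (mesh N * (\<Sum>i\<le>N. (cmod (Dmul N Y i))\<^sup>2))"

definition opnormY :: "nat \<Rightarrow> ((nat \<Rightarrow> complex) \<Rightarrow> (nat \<Rightarrow> complex)) \<Rightarrow> real" where
  "opnormY N L = Sup {normY N (L Y) | Y. isvec N Y \<and> normY N Y \<le> 1}"

end

theory Submission
  imports Defs
begin


definition prevY :: "(nat \<Rightarrow> complex) \<Rightarrow> nat \<Rightarrow> complex" where
  "prevY Y i = (if i = 0 then 0 else Y (i - 1))"

definition dd :: "nat \<Rightarrow> (nat \<Rightarrow> complex) \<Rightarrow> nat \<Rightarrow> complex" where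
  "dd N Y i = (Y i - prevY Y i) / complex_of_real (mesh N)"

primrec zrec :: "real \<Rightarrow> nat \<Rightarrow> (nat \<Rightarrow> complex) \<Rightarrow> nat \<Rightarrow> complex" where
  "zrec k N Y 0 = - \<i> * complex_of_real k * Y N"
| "zrec k N Y (Suc m) = 2 * dd N Y (N - m) - zrec k N Y m"

definition zext :: "real \<Rightarrow> nat \<Rightarrow> (nat \<Rightarrow> complex) \<Rightarrow> nat \<Rightarrow> complex" where
  "zext k N Y i = (if i \<le> Suc N then zrec k N Y (Suc N - i) else 0)"

lemma zext_rel: "i \<le> N \<Longrightarrow> zext k N Y i + zext k N Y (Suc i) = 2 * dd N Y i"
proof -
  assume i: "i \<le> N"
  have "Suc N - i = Suc (N - i)" using i by simp
  moreover have "N - (N - i) = i" using i by simp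
  ultimately show ?thesis using i by (simp add: zext_def)
qed

lemma zext_top: "zext k N Y (Suc N) = - \<i> * complex_of_real k * Y N"
  by (simp add: zext_def)

definition zsx :: "real \<Rightarrow> nat \<Rightarrow> (nat \<Rightarrow> complex) \<Rightarrow> nat \<Rightarrow> complex" where
  "zsx k N Y i = (if i \<le> N then zext k N Y i else 0)"

definition rhsZ :: "real \<Rightarrow> nat \<Rightarrow> (nat \<Rightarrow> complex) \<Rightarrow> nat \<Rightarrow> complex" where
  "rhsZ k N Y = (\<lambda>i. - MTmul N Y i + (if i = N then \<i> * complex_of_real k / 2 * Y N else 0))"

lemma mesh_pos: "mesh N > 0" by (simp add: mesh_def)

lemma MTmul_dd: "i \<le> N \<Longrightarrow> - MTmul N Y i = dd N Y i"
  by (simp add: MTmul_def dd_def prevY_def diff_divide_distrib add_divide_distrib)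

lemma DT_unique:
  assumes "isvec N Z1" "isvec N Z2" "DTmul N Z1 = DTmul N Z2"
  shows "Z1 = Z2"
proof -
  have "\<forall>m. m \<le> N \<longrightarrow> Z1 (N - m) = Z2 (N - m)"
  proof
    fix m show "m \<le> N \<longrightarrow> Z1 (N - m) = Z2 (N - m)"
    proof (induction m)
      case 0
      have "DTmul N Z1 N = DTmul N Z2 N" using assms(3) by simp
      then show ?case by (simp add: DTmul_def)
    next
      case (Suc m)
      show ?case
      proof
        assume m: "Suc m \<le> N"
        define i where "i = N - Suc m"
        have i1: "i < N" "Suc i = N - m" using m by (auto simp: i_def)
        have "DTmul N Z1 i = DTmul N Z2 i" using assms(3) by simp
        moreover have "DTmul N Z1 i = (Z1 i + Z1 (Suc i)) / 2" "DTmul N Z2 i = (Z2 i + Z2 (Suc i)) / 2"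
          using i1 by (simp_all add: DTmul_def)
        ultimately have "(Z1 i + Z1 (Suc i)) / 2 = (Z2 i + Z2 (Suc i)) / 2" by metis
        then have "Z1 i + Z1 (Suc i) = Z2 i + Z2 (Suc i)" by (metis divide_cancel_right zero_neq_numeral)
        moreover have "Z1 (Suc i) = Z2 (Suc i)" using Suc m i1 by simp
        ultimately show "Z1 (N - Suc m) = Z2 (N - Suc m)" by (simp add: i_def)
      qed
    qed
  qed
  show ?thesis
  proof
    fix i show "Z1 i = Z2 i"
    proof (cases "i \<le> N")
      case True
      then show ?thesis using \<open>\<forall>m. _\<close>[rule_format, of "N - i"] by simp
    next
      case False
      then show ?thesis using assms(1,2) by (simp add: isvec_def)
    qed
  qed
qed

lemma zsx_sol: "isvec N (zsx k N Y) \<and> DTmul N (zsx k N Y) = rhsZ k N Y"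
proof
  show "isvec N (zsx k N Y)" by (simp add: isvec_def zsx_def)
  show "DTmul N (zsx k N Y) = rhsZ k N Y"
  proof
    fix i
    consider "i < N" | "i = N" | "i > N" by linarith
    then show "DTmul N (zsx k N Y) i = rhsZ k N Y i"
    proof cases
      case 1
      have "DTmul N (zsx k N Y) i = (zext k N Y i + zext k N Y (Suc i)) / 2"
        using 1 by (simp add: DTmul_def zsx_def)
      also have "\<dots> = dd N Y i" using zext_rel[of i N k Y] 1 by simp
      also have "\<dots> = rhsZ k N Y i" using 1 MTmul_dd[of i N Y] by (simp add: rhsZ_def)
      finally show ?thesis .
    next
      case 2
      have "DTmul N (zsx k N Y) i = zext k N Y N / 2"
        using 2 by (simp add: DTmul_def zsx_def)
      also have "zext k N Y N = 2 * dd N Y N + \<i> * complex_of_real k * Y N"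
        using zext_rel[of N N k Y] zext_top[of k N Y] by (simp add: algebra_simps)
      also have "(2 * dd N Y N + \<i> * complex_of_real k * Y N) / 2 = dd N Y N + \<i> * complex_of_real k / 2 * Y N"
        by (simp add: add_divide_distrib)
      also have "\<dots> = rhsZ k N Y i" using 2 MTmul_dd[of N N Y] by (simp add: rhsZ_def)
      finally show ?thesis .
    next
      case 3
      then show ?thesis by (simp add: DTmul_def zsx_def rhsZ_def MTmul_def)
    qed
  qed
qed

lemma Zsol_eq: "Zsol k N Y = zsx k N Y"
proof -
  have "(THE Z. isvec N Z \<and> DTmul N Z = rhsZ k N Y) = zsx k N Y"
  proof (rule the1_equality)
    show "\<exists>!Z. isvec N Z \<and> DTmul N Z = rhsZ k N Y"
    proof (rule ex1I[of _ "zsx k N Y"])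
      show "isvec N (zsx k N Y) \<and> DTmul N (zsx k N Y) = rhsZ k N Y" by (rule zsx_sol)
      fix Z assume "isvec N Z \<and> DTmul N Z = rhsZ k N Y"
      then show "Z = zsx k N Y" using zsx_sol[of N k Y] DT_unique[of N Z "zsx k N Y"] by simp
    qed
    show "isvec N (zsx k N Y) \<and> DTmul N (zsx k N Y) = rhsZ k N Y" by (rule zsx_sol)
  qed
  then show ?thesis by (simp add: Zsol_def rhsZ_def)
qed

lemma Zsol_char: "isvec N (Zsol k N Y) \<and> DTmul N (Zsol k N Y) = rhsZ k N Y"
  using zsx_sol Zsol_eq by simp

lemma D_unique:
  assumes "isvec N Z1" "isvec N Z2" "Dmul N Z1 = Dmul N Z2"
  shows "Z1 = Z2"
proof -
  have "\<forall>i. i \<le> N \<longrightarrow> Z1 i = Z2 i"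
  proof
    fix i show "i \<le> N \<longrightarrow> Z1 i = Z2 i"
    proof (induction i)
      case 0
      have "Dmul N Z1 0 = Dmul N Z2 0" using assms(3) by simp
      then show ?case by (simp add: Dmul_def)
    next
      case (Suc i)
      show ?case
      proof
        assume i: "Suc i \<le> N"
        have "Dmul N Z1 (Suc i) = Dmul N Z2 (Suc i)" using assms(3) by simp
        then show "Z1 (Suc i) = Z2 (Suc i)" using Suc i by (simp add: Dmul_def)
      qed
    qed
  qed
  show ?thesis
  proof
    fix i show "Z1 i = Z2 i"
      using assms(1,2) \<open>\<forall>i. i \<le> N \<longrightarrow> Z1 i = Z2 i\<close> unfolding isvec_def
      by (cases "i \<le> N") auto
  qed
qed

primrec wrec :: "(nat \<Rightarrow> complex) \<Rightarrow> nat \<Rightarrow> complex" where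
  "wrec r 0 = 2 * r 0"
| "wrec r (Suc i) = 2 * r (Suc i) - wrec r i"

lemma D_exists:
  assumes "\<forall>i>N. r i = 0"
  shows "\<exists>!W. isvec N W \<and> Dmul N W = r"
proof -
  define W where "W = (\<lambda>i. if i \<le> N then wrec r i else 0)"
  have "isvec N W" by (simp add: W_def isvec_def)
  moreover have "Dmul N W = r"
  proof
    fix i show "Dmul N W i = r i"
    proof (cases "i \<le> N")
      case True
      show ?thesis
      proof (cases i)
        case 0
        then show ?thesis using True by (simp add: Dmul_def W_def)
      next
        case (Suc j)
        then have "Dmul N W i = (wrec r (Suc j) + wrec r j) / 2" using True by (simp add: Dmul_def W_def)
        also have "\<dots> = r i" using Suc by simp
        finally show ?thesis .
      qed
    next
      case False
      then show ?thesis using assms by (simp add: Dmul_def)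
    qed
  qed
  ultimately show ?thesis
  proof (intro ex1I[of _ W])
    fix V assume "isvec N V \<and> Dmul N V = r"
    then show "V = W" using D_unique[of N V W] \<open>isvec N W\<close> \<open>Dmul N W = r\<close> by simp
  qed simp
qed

definition rhsA :: "real \<Rightarrow> nat \<Rightarrow> (nat \<Rightarrow> complex) \<Rightarrow> nat \<Rightarrow> complex" where
  "rhsA k N Y = (\<lambda>i. - \<i> * Mmul N (Zsol k N Y) i
        - (if i = N then complex_of_real (k / mesh N) * Y N else 0))"

lemma Aop_char: "isvec N (Aop k N Y) \<and> Dmul N (Aop k N Y) = rhsA k N Y"
proof -
  have "\<exists>!W. isvec N W \<and> Dmul N W = rhsA k N Y"
    by (rule D_exists) (simp add: rhsA_def Mmul_def)
  from theI'[OF this] show ?thesis unfolding Aop_def rhsA_def .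
qed

lemma Aop_unique: "isvec N W \<Longrightarrow> Dmul N W = rhsA k N Y \<Longrightarrow> Aop k N Y = W"
  using Aop_char[of N k Y] D_unique[of N W "Aop k N Y"] by simp



definition unitv :: "nat \<Rightarrow> nat \<Rightarrow> complex" where
  "unitv j = (\<lambda>i. if i = j then 1 else 0)"

lemma isvec_unitv: "j \<le> N \<Longrightarrow> isvec N (unitv j)"
  by (simp add: isvec_def unitv_def)

lemma isvec_sum: "(\<And>j. j \<in> J \<Longrightarrow> isvec N (V j)) \<Longrightarrow> isvec N (\<lambda>i. \<Sum>j\<in>J. c j * V j i)"
  by (simp add: isvec_def)

lemma Dmul_sum: "finite J \<Longrightarrow> Dmul N (\<lambda>i. \<Sum>j\<in>J. c j * V j i) i = (\<Sum>j\<in>J. c j * Dmul N (V j) i)"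
  by (cases "0 < i") (simp_all add: Dmul_def sum.distrib[symmetric] distrib_left sum_divide_distrib)

lemma DTmul_sum: "finite J \<Longrightarrow> DTmul N (\<lambda>i. \<Sum>j\<in>J. c j * V j i) i = (\<Sum>j\<in>J. c j * DTmul N (V j) i)"
  by (cases "i < N") (simp_all add: DTmul_def sum.distrib[symmetric] distrib_left sum_divide_distrib)

lemma Mmul_sum: "finite J \<Longrightarrow> Mmul N (\<lambda>i. \<Sum>j\<in>J. c j * V j i) i = (\<Sum>j\<in>J. c j * Mmul N (V j) i)"
  by (cases "i < N") (simp_all add: Mmul_def sum.distrib[symmetric] distrib_left sum_divide_distrib
      sum_negf[symmetric] ring_distribs)

lemma MTmul_sum: "finite J \<Longrightarrow> MTmul N (\<lambda>i. \<Sum>j\<in>J. c j * V j i) i = (\<Sum>j\<in>J. c j * MTmul N (V j) i)"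
  by (cases "0 < i") (simp_all add: MTmul_def sum.distrib[symmetric] distrib_left sum_divide_distrib
      sum_negf[symmetric] ring_distribs)

lemma rhsZ_sum: "finite J \<Longrightarrow> rhsZ k N (\<lambda>i. \<Sum>j\<in>J. c j * V j i) i = (\<Sum>j\<in>J. c j * rhsZ k N (V j) i)"
  by (simp add: rhsZ_def MTmul_sum sum.distrib ring_distribs sum_negf sum_distrib_left
      sum_distrib_right mult_ac sum_subtractf sum_divide_distrib)

lemma Zsol_sum:
  assumes "finite J"
  shows "Zsol k N (\<lambda>i. \<Sum>j\<in>J. c j * V j i) = (\<lambda>i. \<Sum>j\<in>J. c j * Zsol k N (V j) i)"
proof (rule DT_unique[of N])
  show "isvec N (Zsol k N (\<lambda>i. \<Sum>j\<in>J. c j * V j i))" using Zsol_char by blast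
  show "isvec N (\<lambda>i. \<Sum>j\<in>J. c j * Zsol k N (V j) i)" by (rule isvec_sum) (use Zsol_char in blast)
  show "DTmul N (Zsol k N (\<lambda>i. \<Sum>j\<in>J. c j * V j i)) = DTmul N (\<lambda>i. \<Sum>j\<in>J. c j * Zsol k N (V j) i)"
  proof
    fix i
    have "DTmul N (\<lambda>i. \<Sum>j\<in>J. c j * Zsol k N (V j) i) i = (\<Sum>j\<in>J. c j * DTmul N (Zsol k N (V j)) i)"
      by (rule DTmul_sum[OF assms])
    also have "\<dots> = (\<Sum>j\<in>J. c j * rhsZ k N (V j) i)" using Zsol_char by simp
    also have "\<dots> = rhsZ k N (\<lambda>i. \<Sum>j\<in>J. c j * V j i) i" by (rule rhsZ_sum[OF assms, symmetric])
    also have "\<dots> = DTmul N (Zsol k N (\<lambda>i. \<Sum>j\<in>J. c j * V j i)) i" using Zsol_char by simp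
    finally show "DTmul N (Zsol k N (\<lambda>i. \<Sum>j\<in>J. c j * V j i)) i = DTmul N (\<lambda>i. \<Sum>j\<in>J. c j * Zsol k N (V j) i) i" by simp
  qed
qed

lemma rhsA_sum: "finite J \<Longrightarrow> rhsA k N (\<lambda>i. \<Sum>j\<in>J. c j * V j i) i = (\<Sum>j\<in>J. c j * rhsA k N (V j) i)"
  by (simp add: rhsA_def Zsol_sum Mmul_sum sum.distrib ring_distribs sum_negf sum_distrib_left
      sum_distrib_right mult_ac sum_subtractf)

lemma Aop_sum:
  assumes "finite J"
  shows "Aop k N (\<lambda>i. \<Sum>j\<in>J. c j * V j i) = (\<lambda>i. \<Sum>j\<in>J. c j * Aop k N (V j) i)"
proof (rule Aop_unique)
  show "isvec N (\<lambda>i. \<Sum>j\<in>J. c j * Aop k N (V j) i)" by (rule isvec_sum) (use Aop_char in blast)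
  show "Dmul N (\<lambda>i. \<Sum>j\<in>J. c j * Aop k N (V j) i) = rhsA k N (\<lambda>i. \<Sum>j\<in>J. c j * V j i)"
  proof
    fix i
    have "Dmul N (\<lambda>i. \<Sum>j\<in>J. c j * Aop k N (V j) i) i = (\<Sum>j\<in>J. c j * Dmul N (Aop k N (V j)) i)"
      by (rule Dmul_sum[OF assms])
    also have "\<dots> = (\<Sum>j\<in>J. c j * rhsA k N (V j) i)" using Aop_char by simp
    also have "\<dots> = rhsA k N (\<lambda>i. \<Sum>j\<in>J. c j * V j i) i" by (rule rhsA_sum[OF assms, symmetric])
    finally show "Dmul N (\<lambda>i. \<Sum>j\<in>J. c j * Aop k N (V j) i) i = rhsA k N (\<lambda>i. \<Sum>j\<in>J. c j * V j i) i" .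
  qed
qed

lemma vec_rep: "isvec N X \<Longrightarrow> X = (\<lambda>i. \<Sum>j\<le>N. X j * unitv j i)"
proof
  fix i assume X: "isvec N X"
  show "X i = (\<Sum>j\<le>N. X j * unitv j i)"
  proof (cases "i \<le> N")
    case True
    have "(\<Sum>j\<le>N. X j * unitv j i) = (\<Sum>j\<in>{..N}. if j = i then X i else 0)"
      by (rule sum.cong) (auto simp: unitv_def)
    also have "\<dots> = X i" using True by (simp add: sum.delta')
    finally show ?thesis by simp
  next
    case False
    then show ?thesis using X by (auto simp: isvec_def unitv_def intro!: sum.neutral)
  qed
qed

lemma Aop_rep: "isvec N X \<Longrightarrow> Aop k N X = (\<lambda>i. \<Sum>j\<le>N. X j * Aop k N (unitv j) i)"
  using Aop_sum[of "{..N}" k N X unitv] vec_rep[of N X] by simp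

lemma isvec_Aop: "isvec N (Aop k N X)" using Aop_char by blast

lemma isvec_pow: "isvec N Y \<Longrightarrow> isvec N ((Aop k N ^^ n) Y)"
  by (cases n) (simp_all add: isvec_Aop)

definition l1 :: "nat \<Rightarrow> (nat \<Rightarrow> complex) \<Rightarrow> real" where
  "l1 N X = (\<Sum>i\<le>N. cmod (X i))"

definition Lc :: "real \<Rightarrow> nat \<Rightarrow> real" where
  "Lc k N = (\<Sum>j\<le>N. \<Sum>i\<le>N. cmod (Aop k N (unitv j) i))"

lemma Lc_nonneg: "Lc k N \<ge> 0" by (simp add: Lc_def sum_nonneg)

lemma l1_nonneg: "l1 N X \<ge> 0" by (simp add: l1_def sum_nonneg)

lemma comp_le_l1: "isvec N X \<Longrightarrow> cmod (X i) \<le> l1 N X"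
proof (cases "i \<le> N")
  case True
  then show ?thesis unfolding l1_def
    by (intro member_le_sum) auto
next
  case False
  assume "isvec N X"
  then show ?thesis using False by (simp add: isvec_def l1_nonneg)
qed

lemma l1_Aop: assumes X: "isvec N X" shows "l1 N (Aop k N X) \<le> Lc k N * l1 N X"
proof -
  have "l1 N (Aop k N X) = (\<Sum>i\<le>N. cmod (\<Sum>j\<le>N. X j * Aop k N (unitv j) i))"
    using Aop_rep[OF X, of k] by (simp add: l1_def)
  also have "\<dots> \<le> (\<Sum>i\<le>N. \<Sum>j\<le>N. cmod (X j) * cmod (Aop k N (unitv j) i))"
    by (intro sum_mono) (metis (no_types, lifting) norm_mult norm_sum sum.cong)
  also have "\<dots> = (\<Sum>j\<le>N. cmod (X j) * (\<Sum>i\<le>N. cmod (Aop k N (unitv j) i)))"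
    by (subst sum.swap) (simp add: sum_distrib_left)
  also have "\<dots> \<le> (\<Sum>j\<le>N. cmod (X j) * Lc k N)"
  proof (intro sum_mono mult_left_mono)
    fix j assume "j \<in> {..N}"
    then show "(\<Sum>i\<le>N. cmod (Aop k N (unitv j) i)) \<le> Lc k N"
      unfolding Lc_def by (intro member_le_sum[where f = "\<lambda>j. \<Sum>i\<le>N. cmod (Aop k N (unitv j) i)"])
        (auto intro: sum_nonneg)
  qed simp
  also have "\<dots> = Lc k N * l1 N X" by (simp add: l1_def sum_distrib_left mult_ac)
  finally show ?thesis .
qed

lemma l1_pow: "isvec N Y \<Longrightarrow> l1 N ((Aop k N ^^ n) Y) \<le> Lc k N ^ n * l1 N Y"
proof (induction n)
  case 0 then show ?case by simp
next
  case (Suc n)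
  have "l1 N ((Aop k N ^^ Suc n) Y) = l1 N (Aop k N ((Aop k N ^^ n) Y))" by simp
  also have "\<dots> \<le> Lc k N * l1 N ((Aop k N ^^ n) Y)" by (rule l1_Aop[OF isvec_pow[OF Suc.prems]])
  also have "\<dots> \<le> Lc k N * (Lc k N ^ n * l1 N Y)" by (rule mult_left_mono[OF Suc.IH[OF Suc.prems] Lc_nonneg])
  finally show ?case by (simp add: mult_ac)
qed



definition acoef :: "real \<Rightarrow> nat \<Rightarrow> (nat \<Rightarrow> complex) \<Rightarrow> nat \<Rightarrow> nat \<Rightarrow> complex" where
  "acoef k N Y i n = (Aop k N ^^ n) Y i / fact n"

lemma Tsg_powser: "Tsg k N t Y i = (\<Sum>n. acoef k N Y i n * (complex_of_real t) ^ n)"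
  unfolding Tsg_def acoef_def
  by (simp add: of_real_divide of_real_power mult_ac)

lemma acoef_bound:
  assumes Y: "isvec N Y"
  shows "cmod (acoef k N Y i n * z ^ n) \<le> l1 N Y * (inverse (fact n) * (Lc k N * cmod z) ^ n)"
proof -
  have "cmod (acoef k N Y i n * z ^ n) = cmod ((Aop k N ^^ n) Y i) * cmod z ^ n / fact n"
    by (simp add: acoef_def norm_mult norm_divide norm_power)
  also have "\<dots> \<le> (Lc k N ^ n * l1 N Y) * cmod z ^ n / fact n"
    using comp_le_l1[OF isvec_pow[OF Y, where k=k and n=n], of i] l1_pow[OF Y, where k=k and n=n]
    by (intro divide_right_mono mult_right_mono) auto
  also have "\<dots> = l1 N Y * (inverse (fact n) * (Lc k N * cmod z) ^ n)"
    by (simp add: field_simps power_mult_distrib)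
  finally show ?thesis .
qed

lemma acoef_summable:
  assumes Y: "isvec N Y"
  shows "summable (\<lambda>n. acoef k N Y i n * z ^ n)"
proof (rule summable_comparison_test'[where N = 0])
  show "summable (\<lambda>n. l1 N Y * (inverse (fact n) * (Lc k N * cmod z) ^ n))"
    by (intro summable_mult summable_exp)
  fix n show "cmod (acoef k N Y i n * z ^ n) \<le> l1 N Y * (inverse (fact n) * (Lc k N * cmod z) ^ n)"
    by (rule acoef_bound[OF Y])
qed

lemma isvec_Tsg: "isvec N Y \<Longrightarrow> isvec N (Tsg k N t Y)"
proof -
  assume Y: "isvec N Y"
  have "\<And>i n. i > N \<Longrightarrow> (Aop k N ^^ n) Y i = 0" using isvec_pow[OF Y] by (simp add: isvec_def)
  then show ?thesis by (simp add: isvec_def Tsg_def)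
qed

lemma Tsg_zero: "Tsg k N 0 Y = Y"
proof
  fix i
  have "Tsg k N 0 Y i = (\<Sum>n. acoef k N Y i n * 0 ^ n)" by (simp add: Tsg_powser)
  also have "\<dots> = acoef k N Y i 0" by (rule powser_zero)
  also have "\<dots> = Y i" by (simp add: acoef_def)
  finally show "Tsg k N 0 Y i = Y i" .
qed

lemma diffs_acoef:
  assumes Y: "isvec N Y"
  shows "diffs (acoef k N Y i) n = (\<Sum>j\<le>N. acoef k N Y j n * Aop k N (unitv j) i)"
proof -
  have "diffs (acoef k N Y i) n = (Aop k N ^^ Suc n) Y i / fact n"
  proof -
    have nz: "(of_nat (Suc n) :: complex) \<noteq> 0" by (simp del: of_nat_Suc)
    have "of_nat (Suc n) * (x / fact (Suc n)) = x / (fact n :: complex)" for x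
      using nz by (simp add: fact_Suc del: of_nat_Suc)
    then show ?thesis by (simp add: diffs_def acoef_def del: funpow.simps)
  qed
  also have "(Aop k N ^^ Suc n) Y i = (\<Sum>j\<le>N. (Aop k N ^^ n) Y j * Aop k N (unitv j) i)"
    using Aop_rep[OF isvec_pow[OF Y, where k=k and n=n], of k] by simp
  finally have 1: "diffs (acoef k N Y i) n = (\<Sum>j\<le>N. (Aop k N ^^ n) Y j * Aop k N (unitv j) i) / fact n" .
  have 2: "(\<Sum>j\<le>N. acoef k N Y j n * Aop k N (unitv j) i) = (\<Sum>j\<le>N. (Aop k N ^^ n) Y j * Aop k N (unitv j) i) / fact n"
    by (simp add: acoef_def sum_divide_distrib)
  show ?thesis by (simp only: 1 2)
qed

lemma Tsg_deriv:
  assumes Y: "isvec N Y"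
  shows "((\<lambda>t. Tsg k N t Y i) has_vector_derivative Aop k N (Tsg k N t Y) i) (at t)"
proof -
  have d: "((\<lambda>z. \<Sum>n. acoef k N Y i n * z ^ n) has_field_derivative
           (\<Sum>n. diffs (acoef k N Y i) n * z ^ n)) (at z)" for z
    by (rule termdiffs_strong_converges_everywhere) (rule acoef_summable[OF Y])
  have "(\<Sum>n. diffs (acoef k N Y i) n * z ^ n) =
        (\<Sum>j\<le>N. (\<Sum>n. acoef k N Y j n * z ^ n) * Aop k N (unitv j) i)" for z
  proof -
    have "(\<Sum>n. diffs (acoef k N Y i) n * z ^ n) = (\<Sum>n. \<Sum>j\<le>N. acoef k N Y j n * z ^ n * Aop k N (unitv j) i)"
      by (simp add: diffs_acoef[OF Y] sum_distrib_right sum_distrib_left mult_ac)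
    also have "\<dots> = (\<Sum>j\<le>N. \<Sum>n. acoef k N Y j n * z ^ n * Aop k N (unitv j) i)"
      by (rule suminf_sum) (intro summable_mult2 acoef_summable[OF Y])
    also have "\<dots> = (\<Sum>j\<le>N. (\<Sum>n. acoef k N Y j n * z ^ n) * Aop k N (unitv j) i)"
      by (intro sum.cong refl suminf_mult2[symmetric] acoef_summable[OF Y])
    finally show ?thesis .
  qed
  also have "(\<Sum>j\<le>N. (\<Sum>n. acoef k N Y j n * (complex_of_real t) ^ n) * Aop k N (unitv j) i)
     = Aop k N (Tsg k N t Y) i"
    using Aop_rep[OF isvec_Tsg[OF Y, of k t], of k] by (simp add: Tsg_powser)
  finally have "((\<lambda>z. \<Sum>n. acoef k N Y i n * z ^ n) has_field_derivative Aop k N (Tsg k N t Y) i)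
      (at (complex_of_real t))" using d[of "complex_of_real t"] by simp
  from has_vector_derivative_real_field[OF this]
  show ?thesis by (simp add: Tsg_powser)
qed



definition uf :: "(nat \<Rightarrow> complex) \<Rightarrow> nat \<Rightarrow> complex" where
  "uf y i = (y i + prevY y i) / 2"

definition dq :: "real \<Rightarrow> (nat \<Rightarrow> complex) \<Rightarrow> nat \<Rightarrow> complex" where
  "dq h y i = (y i - prevY y i) / complex_of_real h"

lemma prevY_Suc[simp]: "prevY y (Suc i) = y i" by (simp add: prevY_def)
lemma prevY_0[simp]: "prevY y 0 = 0" by (simp add: prevY_def)

lemma en_pt:
  fixes a b pp q d h :: complex
  assumes "q = pp + h * d" "b = 2*d - a" "cnj h = h"
  shows "(a - b) * cnj ((q + pp)/2) = a * cnj q - b * cnj pp - h * (d * cnj d)"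
  unfolding assms(1,2) using assms(3) by (simp add: algebra_simps add_divide_distrib diff_divide_distrib)

lemma tele: "(\<Sum>i\<le>N. G (Suc i) - G i) = G (Suc N) - (G 0 :: 'a::ab_group_add)"
  using sum_lessThan_telescope[of G "Suc N"] by (simp add: lessThan_Suc_atMost)

lemma tele': "(\<Sum>i\<le>N. G (Suc i)) - sum G {..N} = G (Suc N) - (G 0 :: 'a::ab_group_add)"
  using tele[of G N] by (simp add: sum_subtractf)

lemma en_sum:
  assumes h: "h \<noteq> 0"
    and zrel: "\<And>i. i \<le> N \<Longrightarrow> zz i + zz (Suc i) = 2 * dq h y i"
  shows "(\<Sum>i\<le>N. (zz (Suc i) - zz i) * cnj (uf y i))
         = zz (Suc N) * cnj (y N) - complex_of_real h * (\<Sum>i\<le>N. dq h y i * cnj (dq h y i))"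
proof -
  define G where "G i = zz i * cnj (prevY y i)" for i
  have pt: "(zz (Suc i) - zz i) * cnj (uf y i) = (G (Suc i) - G i) - complex_of_real h * (dq h y i * cnj (dq h y i))"
    if i: "i \<le> N" for i
  proof -
    have "(zz (Suc i) - zz i) * cnj ((y i + prevY y i)/2) =
          zz (Suc i) * cnj (y i) - zz i * cnj (prevY y i) - complex_of_real h * (dq h y i * cnj (dq h y i))"
    proof (rule en_pt)
      show "y i = prevY y i + complex_of_real h * dq h y i" using h by (simp add: dq_def)
      show "zz i = 2 * dq h y i - zz (Suc i)" using zrel[OF i] by (simp add: algebra_simps)
    qed simp
    then show ?thesis by (simp add: G_def uf_def)
  qed
  have "(\<Sum>i\<le>N. (zz (Suc i) - zz i) * cnj (uf y i)) =
        (\<Sum>i\<le>N. (G (Suc i) - G i) - complex_of_real h * (dq h y i * cnj (dq h y i)))"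
    by (rule sum.cong) (auto simp: pt)
  also have "\<dots> = (G (Suc N) - G 0) - complex_of_real h * (\<Sum>i\<le>N. dq h y i * cnj (dq h y i))"
    by (simp add: sum_subtractf tele' sum_distrib_left)
  also have "G (Suc N) - G 0 = zz (Suc N) * cnj (y N)" by (simp add: G_def)
  finally show ?thesis .
qed

definition Rf :: "real \<Rightarrow> (nat \<Rightarrow> complex) \<Rightarrow> nat \<Rightarrow> complex" where
  "Rf h zz i = - \<i> * (zz (Suc i) - zz i) / complex_of_real h"

definition vf :: "real \<Rightarrow> nat \<Rightarrow> (nat \<Rightarrow> complex) \<Rightarrow> nat \<Rightarrow> complex" where
  "vf h N w m = complex_of_real h * (\<Sum>l = m..N. w l)"

definition cw :: "real \<Rightarrow> nat \<Rightarrow> real" where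
  "cw h i = (real i + 1/2) * h"

definition PB :: "real \<Rightarrow> nat \<Rightarrow> (nat \<Rightarrow> complex) \<Rightarrow> (nat \<Rightarrow> complex) \<Rightarrow> complex" where
  "PB h N w1 w2 = \<i> * complex_of_real h *
     (\<Sum>i\<le>N. complex_of_real (cw h i) * ((vf h N w1 i + vf h N w1 (Suc i)) / 2) * cnj (w2 i))"

lemma cnj_mult_self: "z * cnj z = complex_of_real ((cmod z)\<^sup>2)"
  by (rule complex_norm_square[symmetric])

lemma Re_diff_half: "Re ((q - p) * cnj ((q + p) / 2)) = ((cmod q)\<^sup>2 - (cmod p)\<^sup>2) / 2"
  unfolding cmod_power2 by (simp add: algebra_simps power2_eq_square)

lemma Re_diff_half': "Re (((q + p) / 2) * cnj (q - p)) = ((cmod q)\<^sup>2 - (cmod p)\<^sup>2) / 2"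
  unfolding cmod_power2 by (simp add: algebra_simps power2_eq_square)

lemma energy_id:
  assumes h: "h > 0"
    and zrel: "\<And>i. i \<le> N \<Longrightarrow> zz i + zz (Suc i) = 2 * dq h y i"
    and ztop: "zz (Suc N) = - \<i> * complex_of_real k * y N"
  shows "Re (complex_of_real h * (\<Sum>i\<le>N. Rf h zz i * cnj (uf y i))) = - k * (cmod (y N))\<^sup>2"
proof -
  define S where "S = (\<Sum>i\<le>N. (cmod (dq h y i))\<^sup>2)"
  have "complex_of_real h * (\<Sum>i\<le>N. Rf h zz i * cnj (uf y i))
        = - \<i> * (\<Sum>i\<le>N. (zz (Suc i) - zz i) * cnj (uf y i))"
    using h by (simp add: Rf_def sum_distrib_left mult.assoc)
  also have "\<dots> = - \<i> * (zz (Suc N) * cnj (y N) - complex_of_real h * (\<Sum>i\<le>N. dq h y i * cnj (dq h y i)))"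
    using en_sum[of h N zz y] h zrel by simp
  also have "(\<Sum>i\<le>N. dq h y i * cnj (dq h y i)) = complex_of_real S"
    by (simp add: S_def cnj_mult_self)
  also have "zz (Suc N) * cnj (y N) = - \<i> * complex_of_real (k * (cmod (y N))\<^sup>2)"
    using ztop by (simp add: mult.assoc cnj_mult_self)
  finally show ?thesis by simp
qed

lemma vf_R:
  assumes h: "h > 0" and m: "m \<le> Suc N"
  shows "vf h N (Rf h zz) m = - \<i> * (zz (Suc N) - zz m)"
proof -
  have "vf h N (Rf h zz) m = - \<i> * (\<Sum>l = m..N. zz (Suc l) - zz l)"
    using h by (simp add: vf_def Rf_def sum_distrib_left sum_divide_distrib[symmetric])
  also have "(\<Sum>l = m..N. zz (Suc l) - zz l) = zz (Suc N) - zz m"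
    by (rule sum_Suc_diff[OF m])
  finally show ?thesis .
qed

lemma vf_step: "i \<le> N \<Longrightarrow> vf h N w i = vf h N w (Suc i) + complex_of_real h * w i"
proof -
  assume i: "i \<le> N"
  have "{i..N} = insert i {Suc i..N}" using i by auto
  then show ?thesis by (simp add: vf_def algebra_simps)
qed

lemma vf_top: "vf h N w (Suc N) = 0" by (simp add: vf_def)

lemma Re_ofreal_mult: "Re (complex_of_real r * z) = r * Re z" by simp

lemma S1_id:
  assumes h: "h > 0"
    and zrel: "\<And>i. i \<le> N \<Longrightarrow> zz i + zz (Suc i) = 2 * dq h y i"
    and ztop: "zz (Suc N) = - \<i> * complex_of_real k * y N"
  shows "Re (\<i> * complex_of_real h * (\<Sum>i\<le>N. complex_of_real (cw h i) *
            ((vf h N (Rf h zz) i + vf h N (Rf h zz) (Suc i)) / 2) * cnj (uf y i)))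
       = Re (\<i> * complex_of_real h * (- complex_of_real k * y N) * (\<Sum>i\<le>N. complex_of_real (cw h i) * cnj (uf y i)))
         - (\<Sum>i\<le>N. cw h i * (((cmod (y i))\<^sup>2 - (cmod (prevY y i))\<^sup>2) / 2))"
proof -
  have pt: "complex_of_real (cw h i) * ((vf h N (Rf h zz) i + vf h N (Rf h zz) (Suc i)) / 2) * cnj (uf y i)
      = (- complex_of_real k * y N) * (complex_of_real (cw h i) * cnj (uf y i))
        + \<i> * (complex_of_real (cw h i) * (dq h y i * cnj (uf y i)))" if i: "i \<le> N" for i
  proof -
    have "(vf h N (Rf h zz) i + vf h N (Rf h zz) (Suc i)) / 2 = - \<i> * zz (Suc N) + \<i> * ((zz i + zz (Suc i)) / 2)"
      using i by (simp add: vf_R[OF h] algebra_simps add_divide_distrib diff_divide_distrib)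
    also have "\<dots> = - complex_of_real k * y N + \<i> * dq h y i"
      using zrel[OF i] ztop by (simp flip: mult.assoc)
    finally have e: "(vf h N (Rf h zz) i + vf h N (Rf h zz) (Suc i)) / 2 = - complex_of_real k * y N + \<i> * dq h y i" .
    show ?thesis unfolding e by (simp add: algebra_simps)
  qed
  have "(\<Sum>i\<le>N. complex_of_real (cw h i) * ((vf h N (Rf h zz) i + vf h N (Rf h zz) (Suc i)) / 2) * cnj (uf y i))
    = (- complex_of_real k * y N) * (\<Sum>i\<le>N. complex_of_real (cw h i) * cnj (uf y i))
      + \<i> * (\<Sum>i\<le>N. complex_of_real (cw h i) * (dq h y i * cnj (uf y i)))"
  proof -
    have "(\<Sum>i\<le>N. complex_of_real (cw h i) * ((vf h N (Rf h zz) i + vf h N (Rf h zz) (Suc i)) / 2) * cnj (uf y i))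
      = (\<Sum>i\<le>N. (- complex_of_real k * y N) * (complex_of_real (cw h i) * cnj (uf y i))
        + \<i> * (complex_of_real (cw h i) * (dq h y i * cnj (uf y i))))"
      by (rule sum.cong[OF refl]) (rule pt, simp)
    then show ?thesis by (simp only: sum.distrib sum_distrib_left[symmetric])
  qed
  then have "\<i> * complex_of_real h * (\<Sum>i\<le>N. complex_of_real (cw h i) * ((vf h N (Rf h zz) i + vf h N (Rf h zz) (Suc i)) / 2) * cnj (uf y i))
    = \<i> * complex_of_real h * ((- complex_of_real k * y N) * (\<Sum>i\<le>N. complex_of_real (cw h i) * cnj (uf y i))
      + \<i> * (\<Sum>i\<le>N. complex_of_real (cw h i) * (dq h y i * cnj (uf y i))))"
    by (simp only:)
  also have "\<dots> = \<i> * complex_of_real h * (- complex_of_real k * y N) * (\<Sum>i\<le>N. complex_of_real (cw h i) * cnj (uf y i))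
      - complex_of_real h * (\<Sum>i\<le>N. complex_of_real (cw h i) * (dq h y i * cnj (uf y i)))"
    by (simp add: algebra_simps)
  also have "complex_of_real h * (\<Sum>i\<le>N. complex_of_real (cw h i) * (dq h y i * cnj (uf y i)))
     = (\<Sum>i\<le>N. complex_of_real (cw h i) * ((complex_of_real h * dq h y i) * cnj (uf y i)))"
    by (simp add: sum_distrib_left mult_ac)
  finally have "\<i> * complex_of_real h * (\<Sum>i\<le>N. complex_of_real (cw h i) * ((vf h N (Rf h zz) i + vf h N (Rf h zz) (Suc i)) / 2) * cnj (uf y i))
    = \<i> * complex_of_real h * (- complex_of_real k * y N) * (\<Sum>i\<le>N. complex_of_real (cw h i) * cnj (uf y i))
      - (\<Sum>i\<le>N. complex_of_real (cw h i) * ((complex_of_real h * dq h y i) * cnj (uf y i)))" .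
  moreover have "Re (\<Sum>i\<le>N. complex_of_real (cw h i) * ((complex_of_real h * dq h y i) * cnj (uf y i)))
      = (\<Sum>i\<le>N. cw h i * (((cmod (y i))\<^sup>2 - (cmod (prevY y i))\<^sup>2) / 2))"
  proof -
    have eq: "complex_of_real h * dq h y i = y i - prevY y i" for i using h by (simp add: dq_def)
    have "Re (\<Sum>i\<le>N. complex_of_real (cw h i) * ((complex_of_real h * dq h y i) * cnj (uf y i)))
       = (\<Sum>i\<le>N. cw h i * Re ((y i - prevY y i) * cnj ((y i + prevY y i) / 2)))"
      by (simp only: Re_sum Re_ofreal_mult eq uf_def)
    then show ?thesis by (simp only: Re_diff_half)
  qed
  ultimately show ?thesis by simp
qed

lemma phi_pt:
  fixes V1 u a d x h ca cd :: complex
  shows "(x + h/2) * ((V1 + h*u + V1)/2) * (ca - (2*cd - ca)) =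
         (x + h) * V1 * ca - x * (V1 + h*u) * (2*cd - ca) - (h * ((V1 + h*u + V1)/2) - h*(x + h/2)*u) * cd
         + (h^2/4) * u * (ca - (2*cd - ca))"
  by (simp add: algebra_simps power2_eq_square add_divide_distrib diff_divide_distrib)

lemma H_pt:
  fixes V1 u h cq cp cd cu :: complex
  assumes "cq = cp + h * cd" "cu = cp + h * cd / 2"
  shows "h * ((V1 + h*u + V1)/2) * cd = V1 * cq - (V1 + h*u) * cp + h * u * cu"
  unfolding assms by (simp add: algebra_simps power2_eq_square add_divide_distrib diff_divide_distrib)

lemma phi_pt2:
  fixes V1 v0 u a b d x x1 h c :: complex
  assumes "v0 = V1 + h*u" "b = 2*d - a" "c = x + h/2" "x1 = x + h"
  shows "c * ((v0 + V1)/2) * cnj (a - b) = (x1 * V1 * cnj a - x * v0 * cnj b)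
          - (h * ((v0 + V1)/2) - h * c * u) * cnj d + (h^2/4) * u * cnj (a - b)"
  unfolding assms by (simp add: algebra_simps power2_eq_square add_divide_distrib diff_divide_distrib)

lemma H_pt2:
  fixes V1 v0 u h q p d :: complex
  assumes "v0 = V1 + h*u" "q = p + h * d" "u = (q + p) / 2" "cnj h = h"
  shows "h * ((v0 + V1)/2) * cnj d = (V1 * cnj q - v0 * cnj p) + h * u * cnj u"
proof -
  have "cnj q = cnj p + h * cnj d" using assms(2,4) by simp
  moreover have "cnj u = cnj p + h * cnj d / 2" using assms(2,3,4) by (simp add: add_divide_distrib)
  ultimately show ?thesis unfolding assms(1)
    by (simp add: algebra_simps power2_eq_square add_divide_distrib diff_divide_distrib)
qed

lemma S2_ineq:
  assumes h: "h > 0"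
    and zrel: "\<And>i. i \<le> N \<Longrightarrow> zz i + zz (Suc i) = 2 * dq h y i"
    and ztop: "zz (Suc N) = - \<i> * complex_of_real k * y N"
  shows "Re (\<i> * complex_of_real h * (\<Sum>i\<le>N. complex_of_real (cw h i) *
            ((vf h N (uf y) i + vf h N (uf y) (Suc i)) / 2) * cnj (Rf h zz i)))
       \<ge> h * (\<Sum>i\<le>N. (cmod (uf y i))\<^sup>2) - (\<Sum>i\<le>N. cw h i * (((cmod (y i))\<^sup>2 - (cmod (prevY y i))\<^sup>2) / 2))"
proof -
  define v where "v = vf h N (uf y)"
  define c where "c i = complex_of_real (cw h i)" for i
  define hh where "hh = complex_of_real h"
  define D where "D i = zz (Suc i) - zz i" for i
  define F where "F m = complex_of_real (real m * h) * v m * cnj (zz m)" for m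
  define H where "H m = v m * cnj (prevY y m)" for m
  define Sr where "Sr = (\<Sum>i\<le>N. (cmod (dq h y i))\<^sup>2)"
  have hh0: "hh \<noteq> 0" using h by (simp add: hh_def)
  have stepa: "\<i> * hh * (\<Sum>i\<le>N. c i * ((v i + v (Suc i)) / 2) * cnj (Rf h zz i))
      = - (\<Sum>i\<le>N. c i * ((v i + v (Suc i)) / 2) * cnj (D i))"
  proof -
    have "\<i> * hh * (c i * ((v i + v (Suc i)) / 2) * cnj (Rf h zz i)) = - (c i * ((v i + v (Suc i)) / 2) * cnj (D i))" for i
    proof -
      have ch: "cnj hh = hh" by (simp add: hh_def)
      have "cnj (Rf h zz i) = \<i> * cnj (D i) / hh" by (simp add: Rf_def D_def hh_def[symmetric] ch)
      then have e: "hh * cnj (Rf h zz i) = \<i> * cnj (D i)" using hh0 by simp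
      have "\<i> * hh * (c i * ((v i + v (Suc i)) / 2) * cnj (Rf h zz i)) =
            c i * ((v i + v (Suc i)) / 2) * (\<i> * (hh * cnj (Rf h zz i)))" by (simp only: mult_ac)
      also have "\<dots> = c i * ((v i + v (Suc i)) / 2) * (\<i> * (\<i> * cnj (D i)))" by (simp only: e)
      finally show ?thesis by simp
    qed
    then show ?thesis by (simp add: sum_distrib_left sum_negf[symmetric])
  qed
  have stepb: "c i * ((v i + v (Suc i)) / 2) * cnj (D i) =
      (F (Suc i) - F i) - (hh * ((v i + v (Suc i)) / 2) - hh * c i * uf y i) * cnj (dq h y i)
      + (hh^2/4) * uf y i * cnj (D i)" if i: "i \<le> N" for i
    unfolding D_def F_def
  proof (rule phi_pt2)
    show "v i = v (Suc i) + hh * uf y i" using vf_step[OF i] by (simp add: v_def hh_def)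
    show "zz i = 2 * dq h y i - zz (Suc i)" using zrel[OF i] by (simp add: algebra_simps)
    show "c i = complex_of_real (real i * h) + hh / 2" by (simp add: c_def cw_def hh_def algebra_simps)
    show "complex_of_real (real (Suc i) * h) = complex_of_real (real i * h) + hh" by (simp add: hh_def algebra_simps)
  qed
  have F0: "F 0 = 0" by (simp add: F_def)
  have FN: "F (Suc N) = 0" by (simp add: F_def v_def vf_top)
  have sumb: "(\<Sum>i\<le>N. c i * ((v i + v (Suc i)) / 2) * cnj (D i)) =
      - (\<Sum>i\<le>N. (hh * ((v i + v (Suc i)) / 2) - hh * c i * uf y i) * cnj (dq h y i))
      + (hh^2/4) * (\<Sum>i\<le>N. uf y i * cnj (D i))"
  proof -
    have "(\<Sum>i\<le>N. c i * ((v i + v (Suc i)) / 2) * cnj (D i)) = (\<Sum>i\<le>N. (F (Suc i) - F i)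
        - (hh * ((v i + v (Suc i)) / 2) - hh * c i * uf y i) * cnj (dq h y i) + (hh^2/4) * (uf y i * cnj (D i)))"
    proof (rule sum.cong[OF refl])
      fix i assume "i \<in> {..N}"
      then have i: "i \<le> N" by simp
      show "c i * ((v i + v (Suc i)) / 2) * cnj (D i) = (F (Suc i) - F i)
        - (hh * ((v i + v (Suc i)) / 2) - hh * c i * uf y i) * cnj (dq h y i) + (hh^2/4) * (uf y i * cnj (D i))"
        using stepb[OF i] by (simp only: mult.assoc)
    qed
    also have "\<dots> = (F (Suc N) - F 0) - (\<Sum>i\<le>N. (hh * ((v i + v (Suc i)) / 2) - hh * c i * uf y i) * cnj (dq h y i))
        + (hh^2/4) * (\<Sum>i\<le>N. uf y i * cnj (D i))"
      by (simp only: sum.distrib sum_subtractf tele tele' sum_distrib_left)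
    finally show ?thesis by (simp add: F0 FN)
  qed
  have sumd: "(\<Sum>i\<le>N. uf y i * cnj (D i)) = cnj (zz (Suc N) * cnj (y N)) - hh * complex_of_real Sr"
  proof -
    have "(\<Sum>i\<le>N. uf y i * cnj (D i)) = cnj (\<Sum>i\<le>N. D i * cnj (uf y i))" by (simp add: mult.commute)
    also have "(\<Sum>i\<le>N. D i * cnj (uf y i)) = zz (Suc N) * cnj (y N) - hh * (\<Sum>i\<le>N. dq h y i * cnj (dq h y i))"
      unfolding D_def hh_def using en_sum[of h N zz y] h zrel by simp
    also have "(\<Sum>i\<le>N. dq h y i * cnj (dq h y i)) = complex_of_real Sr" by (simp add: Sr_def cnj_mult_self)
    finally show ?thesis by (simp add: hh_def)
  qed
  have Re0: "Re (cnj (zz (Suc N) * cnj (y N))) = 0"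
    using ztop by (simp add: mult.assoc cnj_mult_self)
  have sumH: "(\<Sum>i\<le>N. hh * ((v i + v (Suc i)) / 2) * cnj (dq h y i)) = hh * (\<Sum>i\<le>N. uf y i * cnj (uf y i))"
  proof -
    have "(\<Sum>i\<le>N. hh * ((v i + v (Suc i)) / 2) * cnj (dq h y i)) = (\<Sum>i\<le>N. (H (Suc i) - H i) + hh * uf y i * cnj (uf y i))"
    proof (rule sum.cong[OF refl])
      fix i assume "i \<in> {..N}"
      then have i: "i \<le> N" by simp
      show "hh * ((v i + v (Suc i)) / 2) * cnj (dq h y i) = (H (Suc i) - H i) + hh * uf y i * cnj (uf y i)"
        unfolding H_def prevY_Suc
      proof (rule H_pt2)
        show "v i = v (Suc i) + hh * uf y i" using vf_step[OF i] by (simp add: v_def hh_def)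
        show "y i = prevY y i + hh * dq h y i" using h by (simp add: dq_def hh_def)
        show "uf y i = (y i + prevY y i) / 2" by (simp add: uf_def)
        show "cnj hh = hh" by (simp add: hh_def)
      qed
    qed
    also have "\<dots> = (H (Suc N) - H 0) + hh * (\<Sum>i\<le>N. uf y i * cnj (uf y i))"
      by (simp only: sum.distrib tele tele' sum_subtractf sum_distrib_left mult.assoc)
    also have "H (Suc N) - H 0 = 0" by (simp add: H_def v_def vf_top)
    finally show ?thesis by simp
  qed
  have ReC: "Re (\<Sum>i\<le>N. hh * c i * uf y i * cnj (dq h y i)) = (\<Sum>i\<le>N. cw h i * (((cmod (y i))\<^sup>2 - (cmod (prevY y i))\<^sup>2) / 2))"
  proof -
    have eq: "hh * c i * uf y i * cnj (dq h y i) = complex_of_real (cw h i) * (((y i + prevY y i) / 2) * cnj (y i - prevY y i))" for i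
      using h by (simp add: hh_def c_def uf_def dq_def)
    show ?thesis by (simp only: Re_sum eq Re_ofreal_mult Re_diff_half')
  qed
  have Sr0: "Sr \<ge> 0" by (simp add: Sr_def sum_nonneg)
  have "\<i> * hh * (\<Sum>i\<le>N. c i * ((v i + v (Suc i)) / 2) * cnj (Rf h zz i)) =
     (\<Sum>i\<le>N. hh * ((v i + v (Suc i)) / 2) * cnj (dq h y i)) - (\<Sum>i\<le>N. hh * c i * uf y i * cnj (dq h y i))
     - (hh^2/4) * (cnj (zz (Suc N) * cnj (y N)) - hh * complex_of_real Sr)"
    unfolding stepa sumb sumd by (simp add: sum_subtractf algebra_simps sum_distrib_left)
  also have "\<dots> = hh * (\<Sum>i\<le>N. uf y i * cnj (uf y i)) - (\<Sum>i\<le>N. hh * c i * uf y i * cnj (dq h y i))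
     - (hh^2/4) * (cnj (zz (Suc N) * cnj (y N)) - hh * complex_of_real Sr)"
    by (simp only: sumH)
  finally have main: "Re (\<i> * hh * (\<Sum>i\<le>N. c i * ((v i + v (Suc i)) / 2) * cnj (Rf h zz i))) =
     h * (\<Sum>i\<le>N. (cmod (uf y i))\<^sup>2) - (\<Sum>i\<le>N. cw h i * (((cmod (y i))\<^sup>2 - (cmod (prevY y i))\<^sup>2) / 2))
     + h^3/4 * Sr"
  proof -
    assume e: "\<i> * hh * (\<Sum>i\<le>N. c i * ((v i + v (Suc i)) / 2) * cnj (Rf h zz i)) =
      hh * (\<Sum>i\<le>N. uf y i * cnj (uf y i)) - (\<Sum>i\<le>N. hh * c i * uf y i * cnj (dq h y i))
     - (hh^2/4) * (cnj (zz (Suc N) * cnj (y N)) - hh * complex_of_real Sr)"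
    have r1: "Re (hh * (\<Sum>i\<le>N. uf y i * cnj (uf y i))) = h * (\<Sum>i\<le>N. (cmod (uf y i))\<^sup>2)"
      by (simp add: hh_def cnj_mult_self)
    have r3: "Re ((hh^2/4) * (cnj (zz (Suc N) * cnj (y N)) - hh * complex_of_real Sr)) = - (h^3/4 * Sr)"
    proof -
      have "(hh^2/4) * (cnj (zz (Suc N) * cnj (y N)) - hh * complex_of_real Sr) =
            complex_of_real (h^2/4) * cnj (zz (Suc N) * cnj (y N)) - complex_of_real (h^3/4 * Sr)"
        by (simp add: hh_def algebra_simps power2_eq_square power3_eq_cube)
      then show ?thesis using Re0 by (simp only: minus_complex.sel Re_ofreal_mult Re_complex_of_real)
    qed
    show ?thesis unfolding e using r1 ReC r3 by simp
  qed
  show ?thesis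
    using main Sr0 h by (simp add: v_def c_def hh_def)
qed



lemma cw_tele: "(\<Sum>i\<le>n. cw h i * ((cmod (y i))\<^sup>2 - (cmod (prevY y i))\<^sup>2))
   = cw h n * (cmod (y n))\<^sup>2 - h * (\<Sum>i<n. (cmod (y i))\<^sup>2)"
proof (induction n)
  case 0 then show ?case by simp
next
  case (Suc n)
  have "(\<Sum>i\<le>Suc n. cw h i * ((cmod (y i))\<^sup>2 - (cmod (prevY y i))\<^sup>2))
     = cw h n * (cmod (y n))\<^sup>2 - h * (\<Sum>i<n. (cmod (y i))\<^sup>2)
       + cw h (Suc n) * ((cmod (y (Suc n)))\<^sup>2 - (cmod (y n))\<^sup>2)"
    using Suc by simp
  then show ?case by (simp add: cw_def algebra_simps)
qed

lemma uf_sq: "(cmod (uf y i))\<^sup>2 \<le> ((cmod (y i))\<^sup>2 + (cmod (prevY y i))\<^sup>2) / 2"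
proof -
  have t: "cmod (uf y i) \<le> (cmod (y i) + cmod (prevY y i)) / 2"
    unfolding uf_def by (simp add: norm_triangle_ineq divide_right_mono)
  have "(cmod (uf y i))\<^sup>2 \<le> ((cmod (y i) + cmod (prevY y i)) / 2)\<^sup>2"
    by (rule power_mono[OF t]) simp
  also have "\<dots> \<le> ((cmod (y i))\<^sup>2 + (cmod (prevY y i))\<^sup>2) / 2"
  proof -
    have "((cmod (y i) + cmod (prevY y i)) / 2)\<^sup>2 = ((cmod (y i))\<^sup>2 + (cmod (prevY y i))\<^sup>2) / 2 - ((cmod (y i) - cmod (prevY y i)) / 2)\<^sup>2"
      by (simp add: power2_eq_square field_simps)
    then show ?thesis using zero_le_power2[of "(cmod (y i) - cmod (prevY y i)) / 2"] by linarith
  qed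
  finally show ?thesis .
qed

lemma prev_sum: "(\<Sum>i\<le>N. (cmod (prevY y i))\<^sup>2) = (\<Sum>i<N. (cmod (y i))\<^sup>2)"
  by (simp add: sum.atMost_shift)

lemma E_le:
  assumes "h \<ge> 0"
  shows "h * (\<Sum>i\<le>N. (cmod (uf y i))\<^sup>2) \<le> h * (\<Sum>i<N. (cmod (y i))\<^sup>2) + h * (cmod (y N))\<^sup>2"
proof -
  have "(\<Sum>i\<le>N. (cmod (uf y i))\<^sup>2) \<le> (\<Sum>i\<le>N. ((cmod (y i))\<^sup>2 + (cmod (prevY y i))\<^sup>2) / 2)"
    by (intro sum_mono uf_sq)
  also have "\<dots> = ((\<Sum>i<N. (cmod (y i))\<^sup>2) + (cmod (y N))\<^sup>2 + (\<Sum>i<N. (cmod (y i))\<^sup>2)) / 2"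
  proof -
    have a: "(\<Sum>i\<le>N. (cmod (y i))\<^sup>2) = (\<Sum>i<N. (cmod (y i))\<^sup>2) + (cmod (y N))\<^sup>2"
      by (simp add: lessThan_Suc_atMost[symmetric])
    show ?thesis by (simp only: sum_divide_distrib[symmetric] sum.distrib prev_sum a)
  qed
  also have "\<dots> \<le> (\<Sum>i<N. (cmod (y i))\<^sup>2) + (cmod (y N))\<^sup>2"
    by simp
  finally show ?thesis using assms by (simp add: distrib_left[symmetric] mult_left_mono)
qed

lemma cw_le1: assumes "h = 1 / (real N + 1)" "i \<le> N" shows "cw h i \<le> 1 \<and> cw h i \<ge> 0"
proof -
  have "cw h i = (real i + 1/2) / (real N + 1)" using assms(1) by (simp add: cw_def)
  moreover have "real i + 1/2 \<le> real N + 1" using assms(2) by simp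
  ultimately show ?thesis by simp
qed

lemma A_bound:
  assumes hN: "h = 1 / (real N + 1)" and k: "k \<ge> 0"
  shows "\<bar>Re (\<i> * complex_of_real h * (- complex_of_real k * y N) * (\<Sum>i\<le>N. complex_of_real (cw h i) * cnj (uf y i)))\<bar>
     \<le> h * (\<Sum>i\<le>N. (cmod (uf y i))\<^sup>2) / 2 + k^2 * (cmod (y N))\<^sup>2 / 2"
proof -
  have h0: "h > 0" using hN by simp
  let ?z = "\<i> * complex_of_real h * (- complex_of_real k * y N) * (\<Sum>i\<le>N. complex_of_real (cw h i) * cnj (uf y i))"
  have "\<bar>Re ?z\<bar> \<le> cmod ?z" by (rule abs_Re_le_cmod)
  also have "cmod ?z = h * (k * cmod (y N)) * cmod (\<Sum>i\<le>N. complex_of_real (cw h i) * cnj (uf y i))"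
    using h0 k by (simp add: norm_mult)
  also have "cmod (\<Sum>i\<le>N. complex_of_real (cw h i) * cnj (uf y i)) \<le> (\<Sum>i\<le>N. cmod (uf y i))"
  proof -
    have "cmod (\<Sum>i\<le>N. complex_of_real (cw h i) * cnj (uf y i)) \<le> (\<Sum>i\<le>N. cmod (complex_of_real (cw h i) * cnj (uf y i)))"
      by (rule norm_sum)
    also have "\<dots> \<le> (\<Sum>i\<le>N. cmod (uf y i))"
    proof (rule sum_mono)
      fix i assume "i \<in> {..N}"
      then have "cw h i \<le> 1" "cw h i \<ge> 0" using cw_le1[OF hN] by auto
      then show "cmod (complex_of_real (cw h i) * cnj (uf y i)) \<le> cmod (uf y i)"
        by (simp add: norm_mult mult_left_le_one_le)
    qed
    finally show ?thesis .
  qed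
  then have "h * (k * cmod (y N)) * cmod (\<Sum>i\<le>N. complex_of_real (cw h i) * cnj (uf y i))
      \<le> h * (k * cmod (y N)) * (\<Sum>i\<le>N. cmod (uf y i))"
    using h0 k by (intro mult_left_mono) auto
  also have "\<dots> = h * (\<Sum>i\<le>N. (k * cmod (y N)) * cmod (uf y i))" by (simp add: sum_distrib_left mult.assoc)
  also have "\<dots> \<le> h * (\<Sum>i\<le>N. ((cmod (uf y i))\<^sup>2 + (k * cmod (y N))\<^sup>2) / 2)"
  proof (intro mult_left_mono sum_mono)
    fix i
    show "k * cmod (y N) * cmod (uf y i) \<le> ((cmod (uf y i))\<^sup>2 + (k * cmod (y N))\<^sup>2) / 2"
    proof -
      have "((cmod (uf y i))\<^sup>2 + (k * cmod (y N))\<^sup>2) / 2 - k * cmod (y N) * cmod (uf y i) = (cmod (uf y i) - k * cmod (y N))\<^sup>2 / 2"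
        by (simp add: power2_eq_square field_simps)
      then show ?thesis using zero_le_power2[of "cmod (uf y i) - k * cmod (y N)"] by linarith
    qed
  qed (use h0 in simp)
  also have "\<dots> = h * (\<Sum>i\<le>N. (cmod (uf y i))\<^sup>2) / 2 + h * (real N + 1) * ((k * cmod (y N))\<^sup>2 / 2)"
    by (simp add: sum.distrib sum_divide_distrib[symmetric] field_simps)
  also have "h * (real N + 1) = 1" using hN by simp
  finally show ?thesis by (simp add: power_mult_distrib)
qed

lemma key_ineq:
  assumes hN: "h = 1 / (real N + 1)" and k: "k > 0"
    and zrel: "\<And>i. i \<le> N \<Longrightarrow> zz i + zz (Suc i) = 2 * dq h y i"
    and ztop: "zz (Suc N) = - \<i> * complex_of_real k * y N"
  shows "Re (PB h N (Rf h zz) (uf y) + PB h N (uf y) (Rf h zz))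
     \<ge> h * (\<Sum>i\<le>N. (cmod (uf y i))\<^sup>2) - (k^2/2 + 2) * (cmod (y N))\<^sup>2"
proof -
  have h0: "h > 0" using hN by simp
  have h1: "h \<le> 1" unfolding hN by simp
  define E where "E = h * (\<Sum>i\<le>N. (cmod (uf y i))\<^sup>2)"
  define T where "T = (\<Sum>i\<le>N. cw h i * (((cmod (y i))\<^sup>2 - (cmod (prevY y i))\<^sup>2) / 2))"
  define A where "A = Re (\<i> * complex_of_real h * (- complex_of_real k * y N) * (\<Sum>i\<le>N. complex_of_real (cw h i) * cnj (uf y i)))"
  define aN where "aN = (cmod (y N))\<^sup>2"
  define Sl where "Sl = (\<Sum>i<N. (cmod (y i))\<^sup>2)"
  have P1: "Re (PB h N (Rf h zz) (uf y)) = A - T"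
    unfolding PB_def A_def T_def by (rule S1_id[OF h0 zrel ztop])
  have P2: "Re (PB h N (uf y) (Rf h zz)) \<ge> E - T"
    unfolding PB_def E_def T_def by (rule S2_ineq[OF h0 zrel ztop])
  have T2: "2 * T = cw h N * aN - h * Sl"
  proof -
    have "2 * T = (\<Sum>i\<le>N. cw h i * ((cmod (y i))\<^sup>2 - (cmod (prevY y i))\<^sup>2))"
      by (simp add: T_def sum_distrib_left)
    then show ?thesis by (simp add: cw_tele aN_def Sl_def)
  qed
  have Ab: "\<bar>A\<bar> \<le> E / 2 + k^2 * aN / 2"
    using A_bound[OF hN, of k y] k by (simp add: A_def E_def aN_def)
  have El: "E \<le> h * Sl + h * aN" using E_le[where h=h and N=N and y=y] h0 by (simp add: E_def Sl_def aN_def)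
  have E0: "E \<ge> 0" using h0 by (simp add: E_def sum_nonneg)
  have a0: "aN \<ge> 0" by (simp add: aN_def)
  have c1: "cw h N * aN \<le> aN" using cw_le1[OF hN, of N] a0 by (simp add: mult_left_le_one_le)
  have c2: "h * aN \<le> aN" using h0 h1 a0 by (intro mult_left_le_one_le) auto
  have "Re (PB h N (Rf h zz) (uf y) + PB h N (uf y) (Rf h zz)) \<ge> E - (k^2/2 + 2) * aN"
    using P1 P2 T2 Ab El E0 a0 c1 c2 by (simp add: algebra_simps)
  then show ?thesis by (simp add: E_def aN_def)
qed

lemma Phi_bound:
  assumes hN: "h = 1 / (real N + 1)"
  shows "\<bar>Re (PB h N (uf y) (uf y))\<bar> \<le> h * (\<Sum>i\<le>N. (cmod (uf y i))\<^sup>2)"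
proof -
  have h0: "h > 0" using hN by simp
  define s where "s = h * (\<Sum>l\<le>N. cmod (uf y l))"
  have s0: "s \<ge> 0" using h0 by (simp add: s_def sum_nonneg)
  have vb: "cmod (vf h N (uf y) m) \<le> s" for m
  proof -
    have "cmod (vf h N (uf y) m) = h * cmod (\<Sum>l = m..N. uf y l)" using h0 by (simp add: vf_def norm_mult)
    also have "\<dots> \<le> h * (\<Sum>l = m..N. cmod (uf y l))" using h0 by (intro mult_left_mono norm_sum) auto
    also have "(\<Sum>l = m..N. cmod (uf y l)) \<le> (\<Sum>l\<le>N. cmod (uf y l))" by (rule sum_mono2) auto
    then have "h * (\<Sum>l = m..N. cmod (uf y l)) \<le> s" using h0 by (simp add: s_def)
    finally show ?thesis .
  qed
  have "\<bar>Re (PB h N (uf y) (uf y))\<bar> \<le> cmod (PB h N (uf y) (uf y))" by (rule abs_Re_le_cmod)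
  also have "cmod (PB h N (uf y) (uf y)) = h * cmod (\<Sum>i\<le>N. complex_of_real (cw h i) *
            ((vf h N (uf y) i + vf h N (uf y) (Suc i)) / 2) * cnj (uf y i))"
    using h0 by (simp add: PB_def norm_mult)
  also have "\<dots> \<le> h * (\<Sum>i\<le>N. s * cmod (uf y i))"
  proof (intro mult_left_mono)
    show "cmod (\<Sum>i\<le>N. complex_of_real (cw h i) * ((vf h N (uf y) i + vf h N (uf y) (Suc i)) / 2) * cnj (uf y i))
        \<le> (\<Sum>i\<le>N. s * cmod (uf y i))"
    proof (rule order_trans[OF norm_sum sum_mono])
      fix i assume "i \<in> {..N}"
      then have c: "cw h i \<le> 1" "cw h i \<ge> 0" using cw_le1[OF hN] by auto
      have m: "cmod ((vf h N (uf y) i + vf h N (uf y) (Suc i)) / 2) \<le> s"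
      proof -
        have "cmod (vf h N (uf y) i + vf h N (uf y) (Suc i)) \<le> s + s"
          using vb[of i] vb[of "Suc i"] norm_triangle_ineq[of "vf h N (uf y) i" "vf h N (uf y) (Suc i)"] by linarith
        then show ?thesis by simp
      qed
      have "cmod (complex_of_real (cw h i) * ((vf h N (uf y) i + vf h N (uf y) (Suc i)) / 2) * cnj (uf y i))
          = cw h i * cmod ((vf h N (uf y) i + vf h N (uf y) (Suc i)) / 2) * cmod (uf y i)"
        using c by (simp add: norm_mult)
      also have "\<dots> \<le> 1 * s * cmod (uf y i)"
        using c m s0 by (intro mult_right_mono mult_mono) auto
      finally show "cmod (complex_of_real (cw h i) * ((vf h N (uf y) i + vf h N (uf y) (Suc i)) / 2) * cnj (uf y i))
          \<le> s * cmod (uf y i)" by simp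
    qed
  qed (use h0 in simp)
  also have "\<dots> = s * s" by (simp add: s_def sum_distrib_left mult_ac)
  also have "s * s \<le> h * (\<Sum>i\<le>N. (cmod (uf y i))\<^sup>2)"
  proof -
    have "(\<Sum>l\<le>N. cmod (uf y l))\<^sup>2 \<le> (\<Sum>l\<le>N. (cmod (uf y l))\<^sup>2) * real (card {..N})"
      by (rule sum_squared_le_sum_of_squares)
    then have "(\<Sum>l\<le>N. cmod (uf y l))\<^sup>2 \<le> (\<Sum>l\<le>N. (cmod (uf y l))\<^sup>2) * (real N + 1)" by (simp add: add.commute)
    then have "h^2 * (\<Sum>l\<le>N. cmod (uf y l))\<^sup>2 \<le> h^2 * ((\<Sum>l\<le>N. (cmod (uf y l))\<^sup>2) * (real N + 1))"
      by (intro mult_left_mono) auto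
    also have "h^2 * ((\<Sum>l\<le>N. (cmod (uf y l))\<^sup>2) * (real N + 1)) = h * (\<Sum>l\<le>N. (cmod (uf y l))\<^sup>2) * (h * (real N + 1))"
      by (simp add: power2_eq_square mult_ac)
    also have "h * (real N + 1) = 1" using hN by simp
    finally show ?thesis by (simp add: s_def power2_eq_square mult_ac)
  qed
  finally show ?thesis .
qed



lemma mesh_eq: "mesh N = 1 / (real N + 1)" by (simp add: mesh_def)

lemma conn_zrel: "i \<le> N \<Longrightarrow> zext k N y i + zext k N y (Suc i) = 2 * dq (mesh N) y i"
  using zext_rel[of i N k y] by (simp add: dd_def dq_def)

lemma conn_u: "i \<le> N \<Longrightarrow> Dmul N y i = uf y i"
  by (simp add: Dmul_def uf_def prevY_def)

lemma conn_R:
  assumes i: "i \<le> N"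
  shows "Dmul N (Aop k N y) i = Rf (mesh N) (zext k N y) i"
proof -
  have hz: "complex_of_real (mesh N) \<noteq> 0" using mesh_pos[of N] by simp
  have "Dmul N (Aop k N y) i = rhsA k N y i" using Aop_char[of N k y] by simp
  also have "\<dots> = - \<i> * Mmul N (zsx k N y) i - (if i = N then complex_of_real (k / mesh N) * y N else 0)"
    by (simp add: rhsA_def Zsol_eq)
  also have "\<dots> = Rf (mesh N) (zext k N y) i"
  proof (cases "i < N")
    case True
    then show ?thesis by (simp add: Mmul_def zsx_def Rf_def algebra_simps)
  next
    case False
    then have iN: "i = N" using i by simp
    have "- \<i> * Mmul N (zsx k N y) N - complex_of_real (k / mesh N) * y N
        = (\<i> * zext k N y N - complex_of_real k * y N) / complex_of_real (mesh N)"
      by (simp add: Mmul_def zsx_def diff_divide_distrib)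
    also have "\<dots> = Rf (mesh N) (zext k N y) N"
      by (simp add: Rf_def zext_top algebra_simps)
    finally show ?thesis using iN by simp
  qed
  finally show ?thesis .
qed

definition EQ :: "nat \<Rightarrow> (nat \<Rightarrow> complex) \<Rightarrow> real" where
  "EQ N X = mesh N * (\<Sum>i\<le>N. (cmod (Dmul N X i))\<^sup>2)"

definition PQ :: "nat \<Rightarrow> (nat \<Rightarrow> complex) \<Rightarrow> real" where
  "PQ N X = Re (PB (mesh N) N (Dmul N X) (Dmul N X))"

lemma normY_EQ: "normY N X = sqrt (EQ N X)" by (simp add: normY_def EQ_def)

lemma EQ_nonneg: "EQ N X \<ge> 0" using mesh_pos[of N] by (simp add: EQ_def sum_nonneg)

lemma vf_cong: "(\<And>i. i \<le> N \<Longrightarrow> w i = w' i) \<Longrightarrow> vf h N w m = vf h N w' m"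
  unfolding vf_def by (intro arg_cong[where f = "\<lambda>x. complex_of_real h * x"] sum.cong) auto

lemma PB_cong:
  assumes "\<And>i. i \<le> N \<Longrightarrow> w1 i = w1' i" "\<And>i. i \<le> N \<Longrightarrow> w2 i = w2' i"
  shows "PB h N w1 w2 = PB h N w1' w2'"
proof -
  have "vf h N w1 = vf h N w1'"
  proof
    fix m show "vf h N w1 m = vf h N w1' m" by (rule vf_cong) (rule assms(1))
  qed
  moreover have "(\<Sum>i\<le>N. complex_of_real (cw h i) * ((vf h N w1' i + vf h N w1' (Suc i)) / 2) * cnj (w2 i))
     = (\<Sum>i\<le>N. complex_of_real (cw h i) * ((vf h N w1' i + vf h N w1' (Suc i)) / 2) * cnj (w2' i))"
    using assms(2) by (intro sum.cong) auto
  ultimately show ?thesis by (simp add: PB_def)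
qed

lemma energy_vec: "Re (complex_of_real (mesh N) * (\<Sum>i\<le>N. Dmul N (Aop k N y) i * cnj (Dmul N y i)))
    = - k * (cmod (y N))\<^sup>2"
proof -
  have "(\<Sum>i\<le>N. Dmul N (Aop k N y) i * cnj (Dmul N y i)) = (\<Sum>i\<le>N. Rf (mesh N) (zext k N y) i * cnj (uf y i))"
    by (intro sum.cong) (auto simp: conn_R conn_u[of _ N y])
  then show ?thesis
    using energy_id[OF mesh_pos, where N=N and zz="zext k N y" and y=y and k=k] conn_zrel zext_top by simp
qed

lemma phi_vec:
  assumes k: "k > 0"
  shows "Re (PB (mesh N) N (Dmul N (Aop k N y)) (Dmul N y) + PB (mesh N) N (Dmul N y) (Dmul N (Aop k N y)))
     \<ge> EQ N y - (k^2/2 + 2) * (cmod (y N))\<^sup>2"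
proof -
  have "PB (mesh N) N (Dmul N (Aop k N y)) (Dmul N y) = PB (mesh N) N (Rf (mesh N) (zext k N y)) (uf y)"
    by (rule PB_cong) (auto simp: conn_R conn_u[of _ N y])
  moreover have "PB (mesh N) N (Dmul N y) (Dmul N (Aop k N y)) = PB (mesh N) N (uf y) (Rf (mesh N) (zext k N y))"
    by (rule PB_cong) (auto simp: conn_R conn_u[of _ N y])
  moreover have "EQ N y = mesh N * (\<Sum>i\<le>N. (cmod (uf y i))\<^sup>2)"
    unfolding EQ_def by (intro arg_cong[where f = "\<lambda>x. mesh N * x"] sum.cong) (auto simp: conn_u)
  ultimately show ?thesis
    using key_ineq[OF mesh_eq k, where zz="zext k N y" and y=y] conn_zrel zext_top by simp
qed

lemma phib_vec: "\<bar>PQ N y\<bar> \<le> EQ N y"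
proof -
  have "PB (mesh N) N (Dmul N y) (Dmul N y) = PB (mesh N) N (uf y) (uf y)"
    by (rule PB_cong) (auto simp: conn_u)
  moreover have "EQ N y = mesh N * (\<Sum>i\<le>N. (cmod (uf y i))\<^sup>2)"
    unfolding EQ_def by (intro arg_cong[where f = "\<lambda>x. mesh N * x"] sum.cong) (auto simp: conn_u)
  ultimately show ?thesis using Phi_bound[OF mesh_eq, of N y] by (simp add: PQ_def)
qed



lemma hvd_div: "(f has_vector_derivative f') F \<Longrightarrow> ((\<lambda>x. f x / (c::complex)) has_vector_derivative f' / c) F"
  by (rule bounded_linear.has_vector_derivative[OF bounded_linear_divide])

lemma hvd_cmul: "(f has_vector_derivative f') F \<Longrightarrow> ((\<lambda>x. (c::complex) * f x) has_vector_derivative c * f') F"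
  by (rule bounded_linear.has_vector_derivative[OF bounded_linear_mult_right])

lemma vd_Dmul:
  assumes d: "\<And>i. ((\<lambda>s. X s i) has_vector_derivative X' i) (at t)"
  shows "((\<lambda>s. Dmul N (X s) i) has_vector_derivative Dmul N X' i) (at t)"
proof (cases "i \<le> N")
  case True
  show ?thesis
  proof (cases "0 < i")
    case True2: True
    show ?thesis unfolding Dmul_def using True True2
      by simp (intro hvd_div has_vector_derivative_add d)
  next
    case False
    show ?thesis unfolding Dmul_def using True False
      by simp (intro hvd_div d)
  qed
next
  case False
  then show ?thesis unfolding Dmul_def by simp
qed

lemma vd_vf:
  assumes d: "\<And>i. ((\<lambda>s. w s i) has_vector_derivative w' i) (at t)"
  shows "((\<lambda>s. vf h N (w s) m) has_vector_derivative vf h N w' m) (at t)"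
  unfolding vf_def by (intro hvd_cmul has_vector_derivative_sum d)

lemma vd_PB:
  assumes d: "\<And>i. ((\<lambda>s. w s i) has_vector_derivative w' i) (at t)"
  shows "((\<lambda>s. PB h N (w s) (w s)) has_vector_derivative PB h N w' (w t) + PB h N (w t) w') (at t)"
proof -
  have "((\<lambda>s. PB h N (w s) (w s)) has_vector_derivative
     \<i> * complex_of_real h * (\<Sum>i\<le>N. complex_of_real (cw h i) * ((vf h N (w t) i + vf h N (w t) (Suc i)) / 2) * cnj (w' i)
        + complex_of_real (cw h i) * ((vf h N w' i + vf h N w' (Suc i)) / 2) * cnj (w t i))) (at t)"
    unfolding PB_def
    by (intro hvd_cmul has_vector_derivative_sum has_vector_derivative_mult has_vector_derivative_cnj
        hvd_div has_vector_derivative_add vd_vf d)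
  then show ?thesis
    by (rule has_vector_derivative_eq_rhs) (simp add: PB_def sum.distrib distrib_left)
qed

lemma vd_quad:
  assumes d: "\<And>i. ((\<lambda>s. w s i) has_vector_derivative w' i) (at t)"
  shows "((\<lambda>s. complex_of_real h * (\<Sum>i\<le>N. w s i * cnj (w s i))) has_vector_derivative
          complex_of_real h * (\<Sum>i\<le>N. w t i * cnj (w' i) + w' i * cnj (w t i))) (at t)"
  by (intro hvd_cmul has_vector_derivative_sum has_vector_derivative_mult has_vector_derivative_cnj d)

lemma EQ_Re: "EQ N X = Re (complex_of_real (mesh N) * (\<Sum>i\<le>N. Dmul N X i * cnj (Dmul N X i)))"
  by (simp add: EQ_def cnj_mult_self)

lemma Re_quad_sym: "Re (complex_of_real h * (\<Sum>i\<in>I. a i * cnj (b i) + b i * cnj (a i)))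
    = 2 * Re (complex_of_real h * (\<Sum>i\<in>I. b i * cnj (a i)))"
  by (simp add: sum.distrib sum_distrib_left algebra_simps)

lemma dE:
  assumes Y: "isvec N Y"
  shows "((\<lambda>s. EQ N (Tsg k N s Y)) has_real_derivative - 2 * k * (cmod (Tsg k N t Y N))\<^sup>2) (at t)"
proof -
  have du: "((\<lambda>s. Dmul N (Tsg k N s Y) i) has_vector_derivative Dmul N (Aop k N (Tsg k N t Y)) i) (at t)" for i
    by (rule vd_Dmul) (rule Tsg_deriv[OF Y])
  have "((\<lambda>s. Re (complex_of_real (mesh N) * (\<Sum>i\<le>N. Dmul N (Tsg k N s Y) i * cnj (Dmul N (Tsg k N s Y) i))))
     has_field_derivative Re (complex_of_real (mesh N) * (\<Sum>i\<le>N. Dmul N (Tsg k N t Y) i * cnj (Dmul N (Aop k N (Tsg k N t Y)) i)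
        + Dmul N (Aop k N (Tsg k N t Y)) i * cnj (Dmul N (Tsg k N t Y) i)))) (at t)"
    by (rule has_field_derivative_Re) (rule vd_quad[OF du])
  also have "Re (complex_of_real (mesh N) * (\<Sum>i\<le>N. Dmul N (Tsg k N t Y) i * cnj (Dmul N (Aop k N (Tsg k N t Y)) i)
        + Dmul N (Aop k N (Tsg k N t Y)) i * cnj (Dmul N (Tsg k N t Y) i))) = - 2 * k * (cmod (Tsg k N t Y N))\<^sup>2"
    by (simp only: Re_quad_sym energy_vec)
  finally show ?thesis unfolding EQ_Re .
qed

lemma dP:
  assumes Y: "isvec N Y"
  shows "((\<lambda>s. PQ N (Tsg k N s Y)) has_real_derivative
      Re (PB (mesh N) N (Dmul N (Aop k N (Tsg k N t Y))) (Dmul N (Tsg k N t Y))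
        + PB (mesh N) N (Dmul N (Tsg k N t Y)) (Dmul N (Aop k N (Tsg k N t Y))))) (at t)"
proof -
  have du: "((\<lambda>s. Dmul N (Tsg k N s Y) i) has_vector_derivative Dmul N (Aop k N (Tsg k N t Y)) i) (at t)" for i
    by (rule vd_Dmul) (rule Tsg_deriv[OF Y])
  show ?thesis unfolding PQ_def
    by (rule has_field_derivative_Re) (rule vd_PB[OF du])
qed



lemma decay:
  assumes k: "k > 0" and Y: "isvec N Y" and e0: "\<epsilon> > 0" and e1: "\<epsilon> \<le> 1/2"
    and eC: "\<epsilon> * (k^2/2 + 2) \<le> 2 * k" and t: "t \<ge> 0"
  shows "EQ N (Tsg k N t Y) \<le> 3 * exp (- (2 * \<epsilon> / 3) * t) * EQ N Y"
proof -
  define \<omega> where "\<omega> = 2 * \<epsilon> / 3"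
  define C where "C = k^2/2 + 2"
  define V where "V s = EQ N (Tsg k N s Y) - \<epsilon> * PQ N (Tsg k N s Y)" for s
  define g where "g s = exp (\<omega> * s) * V s" for s
  have w0: "\<omega> > 0" using e0 by (simp add: \<omega>_def)
  have Vb: "EQ N (Tsg k N s Y) / 2 \<le> V s \<and> V s \<le> 3/2 * EQ N (Tsg k N s Y)" for s
  proof -
    have "\<bar>PQ N (Tsg k N s Y)\<bar> \<le> EQ N (Tsg k N s Y)" by (rule phib_vec)
    then have "\<bar>\<epsilon> * PQ N (Tsg k N s Y)\<bar> \<le> 1/2 * EQ N (Tsg k N s Y)"
    proof -
      have "\<bar>\<epsilon> * PQ N (Tsg k N s Y)\<bar> = \<epsilon> * \<bar>PQ N (Tsg k N s Y)\<bar>" using e0 by (simp add: abs_mult)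
      also have "\<dots> \<le> \<epsilon> * EQ N (Tsg k N s Y)" using e0 \<open>\<bar>PQ N (Tsg k N s Y)\<bar> \<le> EQ N (Tsg k N s Y)\<close>
        by (simp add: mult_left_mono)
      also have "\<dots> \<le> 1/2 * EQ N (Tsg k N s Y)" by (rule mult_right_mono[OF e1 EQ_nonneg])
      finally show ?thesis .
    qed
    then show ?thesis using abs_le_D1 abs_le_D2 unfolding V_def by fastforce
  qed
  have dV: "(V has_real_derivative (- 2 * k * (cmod (Tsg k N s Y N))\<^sup>2 - \<epsilon> *
      Re (PB (mesh N) N (Dmul N (Aop k N (Tsg k N s Y))) (Dmul N (Tsg k N s Y))
        + PB (mesh N) N (Dmul N (Tsg k N s Y)) (Dmul N (Aop k N (Tsg k N s Y)))))) (at s)" for s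
    unfolding V_def by (rule DERIV_diff[OF dE[OF Y] DERIV_cmult[OF dP[OF Y]]])
  have dg: "(g has_real_derivative (exp (\<omega> * s) * \<omega> * V s + (- 2 * k * (cmod (Tsg k N s Y N))\<^sup>2 - \<epsilon> *
      Re (PB (mesh N) N (Dmul N (Aop k N (Tsg k N s Y))) (Dmul N (Tsg k N s Y))
        + PB (mesh N) N (Dmul N (Tsg k N s Y)) (Dmul N (Aop k N (Tsg k N s Y))))) * exp (\<omega> * s))) (at s)" for s
  proof -
    have de: "((\<lambda>s. exp (\<omega> * s)) has_real_derivative exp (\<omega> * s) * \<omega>) (at s)"
      by (auto intro!: derivative_eq_intros)
    show ?thesis unfolding g_def by (rule DERIV_mult[OF de dV])
  qed
  have neg: "exp (\<omega> * s) * \<omega> * V s + (- 2 * k * (cmod (Tsg k N s Y N))\<^sup>2 - \<epsilon> *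
      Re (PB (mesh N) N (Dmul N (Aop k N (Tsg k N s Y))) (Dmul N (Tsg k N s Y))
        + PB (mesh N) N (Dmul N (Tsg k N s Y)) (Dmul N (Aop k N (Tsg k N s Y))))) * exp (\<omega> * s) \<le> 0" for s
  proof -
    define E where "E = EQ N (Tsg k N s Y)"
    define a where "a = (cmod (Tsg k N s Y N))\<^sup>2"
    define P' where "P' = Re (PB (mesh N) N (Dmul N (Aop k N (Tsg k N s Y))) (Dmul N (Tsg k N s Y))
        + PB (mesh N) N (Dmul N (Tsg k N s Y)) (Dmul N (Aop k N (Tsg k N s Y))))"
    have P'b: "P' \<ge> E - C * a" unfolding P'_def E_def a_def C_def by (rule phi_vec[OF k])
    have a0: "a \<ge> 0" by (simp add: a_def)
    have "\<omega> * V s \<le> \<omega> * (3/2 * E)" using Vb[of s] w0 by (simp add: E_def)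
    also have "\<omega> * (3/2 * E) = \<epsilon> * E" by (simp add: \<omega>_def)
    finally have 1: "\<omega> * V s \<le> \<epsilon> * E" .
    have "\<epsilon> * P' \<ge> \<epsilon> * (E - C * a)" using P'b e0 by simp
    moreover have "\<epsilon> * C * a \<le> 2 * k * a" using eC a0 by (simp add: C_def mult_right_mono)
    ultimately have 2: "- 2 * k * a - \<epsilon> * P' \<le> - \<epsilon> * E" by (simp add: algebra_simps)
    have "\<omega> * V s + (- 2 * k * a - \<epsilon> * P') \<le> 0" using 1 2 by simp
    then have "exp (\<omega> * s) * (\<omega> * V s + (- 2 * k * a - \<epsilon> * P')) \<le> 0"
      by (simp add: mult_nonneg_nonpos)
    then show ?thesis by (simp add: a_def P'_def algebra_simps)
  qed
  have "g t \<le> g 0"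
    by (rule DERIV_nonpos_imp_nonincreasing[OF t]) (use dg neg in blast)
  then have A: "exp (\<omega> * t) * V t \<le> V 0" by (simp add: g_def)
  have B: "V 0 \<le> 3/2 * EQ N Y" using Vb[of 0] by (simp add: Tsg_zero)
  have C: "exp (\<omega> * t) * (EQ N (Tsg k N t Y) / 2) \<le> exp (\<omega> * t) * V t"
    using Vb[of t] by (intro mult_left_mono) auto
  have D: "exp (\<omega> * t) * (EQ N (Tsg k N t Y) / 2) = exp (\<omega> * t) * EQ N (Tsg k N t Y) / 2" by simp
  have "exp (\<omega> * t) * EQ N (Tsg k N t Y) \<le> 3 * EQ N Y" using A B C D by linarith
  then have "EQ N (Tsg k N t Y) \<le> 3 * EQ N Y / exp (\<omega> * t)" by (simp add: field_simps)
  also have "\<dots> = 3 * exp (- \<omega> * t) * EQ N Y" by (simp add: exp_minus field_simps)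
  finally show ?thesis by (simp add: \<omega>_def)
qed

theorem theorem3:
  fixes k :: real
  assumes "k > 0"
  shows "\<exists>M>0. \<exists>\<omega>>0. \<forall>N::nat. N \<ge> 1 \<longrightarrow> (\<forall>t::real. t \<ge> 0 \<longrightarrow>
           opnormY N (Tsg k N t) \<le> M * exp (- \<omega> * t))"
proof -
  define C where "C = k^2/2 + 2"
  define \<epsilon> where "\<epsilon> = min (1/2) (2 * k / C)"
  have C0: "C > 0" by (simp add: C_def add_nonneg_pos)
  have e0: "\<epsilon> > 0" using assms C0 by (simp add: \<epsilon>_def)
  have e1: "\<epsilon> \<le> 1/2" by (simp add: \<epsilon>_def)
  have eC: "\<epsilon> * (k^2/2 + 2) \<le> 2 * k"
  proof -
    have "\<epsilon> \<le> 2 * k / C" by (simp add: \<epsilon>_def)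
    then have "\<epsilon> * C \<le> 2 * k / C * C" using C0 by (intro mult_right_mono) auto
    then show ?thesis using C0 by (simp add: C_def)
  qed
  have bound: "opnormY N (Tsg k N t) \<le> 2 * exp (- (\<epsilon> / 3) * t)" if t: "t \<ge> 0" for N t
    unfolding opnormY_def
  proof (rule cSup_least)
    show "{normY N (Tsg k N t Y) |Y. isvec N Y \<and> normY N Y \<le> 1} \<noteq> {}"
    proof -
      have "isvec N (\<lambda>_. 0) \<and> normY N (\<lambda>_. 0) \<le> 1" by (simp add: isvec_def normY_def Dmul_def)
      then show ?thesis by blast
    qed
    fix x assume "x \<in> {normY N (Tsg k N t Y) |Y. isvec N Y \<and> normY N Y \<le> 1}"
    then obtain Y where Y: "isvec N Y" "normY N Y \<le> 1" and x: "x = normY N (Tsg k N t Y)" by blast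
    have EY: "EQ N Y \<le> 1" using Y(2) by (simp add: normY_EQ)
    have "EQ N (Tsg k N t Y) \<le> 3 * exp (- (2 * \<epsilon> / 3) * t) * EQ N Y"
      by (rule decay[OF assms Y(1) e0 e1 eC t])
    also have "\<dots> \<le> 3 * exp (- (2 * \<epsilon> / 3) * t) * 1"
      using EY by (intro mult_left_mono) auto
    also have "exp (- (2 * \<epsilon> / 3) * t) = (exp (- (\<epsilon> / 3) * t))\<^sup>2"
    proof -
      have "- (2 * \<epsilon> / 3) * t = - (\<epsilon> / 3) * t + - (\<epsilon> / 3) * t" by (simp add: field_simps)
      then show ?thesis by (simp add: exp_add[symmetric] power2_eq_square)
    qed
    also have "3 * (exp (- (\<epsilon> / 3) * t))\<^sup>2 * 1 \<le> (2 * exp (- (\<epsilon> / 3) * t))\<^sup>2"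
      by (simp add: power_mult_distrib)
    finally have "EQ N (Tsg k N t Y) \<le> (2 * exp (- (\<epsilon> / 3) * t))\<^sup>2" .
    then have s: "sqrt (EQ N (Tsg k N t Y)) \<le> sqrt ((2 * exp (- (\<epsilon> / 3) * t))\<^sup>2)" by (rule real_sqrt_le_mono)
    have q: "sqrt ((2 * exp (- (\<epsilon> / 3) * t))\<^sup>2) = 2 * exp (- (\<epsilon> / 3) * t)"
      using real_sqrt_abs[of "2 * exp (- (\<epsilon> / 3) * t)"] by simp
    have xe: "x = sqrt (EQ N (Tsg k N t Y))" by (simp add: x normY_EQ)
    show "x \<le> 2 * exp (- (\<epsilon> / 3) * t)" using s q xe by linarith
  qed
  have all: "\<forall>N::nat. N \<ge> 1 \<longrightarrow> (\<forall>t::real. t \<ge> 0 \<longrightarrow>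
           opnormY N (Tsg k N t) \<le> 2 * exp (- (\<epsilon> / 3) * t))" using bound by blast
  have pos: "\<epsilon> / 3 > 0" using e0 by simp
  show ?thesis
    apply (rule exI[of _ 2])
    apply (rule conjI)
     apply simp
    apply (rule exI[of _ "\<epsilon> / 3"])
    using pos all by blast
qed


end
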